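(* Every finite indecomposable non-degenerate solution $(X,r)$ of the Yang--Baxter equation with $|X|$ a prime number is simple.
   Context: A set-theoretic solution $(X,r)$: $X$ non-empty, $r\colon X\times X\to X\times X$ satisfying $(r\times\mathrm{id})(\mathrm{id}\times r)(r\times\mathrm{id})=(\mathrm{id}\times r)(r\times\mathrm{id})(\mathrm{id}\times r)$; write $r(x,y)=(\lambda_x(y),\rho_y(x))$; non-degenerate means $r$ bijective and all $\lambda_x,\rho_y$ bijective. $(X,r)$ is decomposable if $X=Y\cup Z$ with $Y,Z$ disjoint non-empty and $r(Y\times Y)\subseteq Y\times Y$, $r(Z\times Z)\subseteq Z\times Z$ with these restrictions being solutions; otherwise indecomposable. A morphism $f\colon(X,r)\to(Y,s)$ is a map with $(f\times f)r=s(f\times f)$; $(X,r)$ with $|X|>1$ is simple if every surjective morphism $(X,r)\to(Y,s)$ is bijective or has $|Y|=1$. *)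

theory Defs
  imports Main "HOL-Computational_Algebra.Primes"
begin

definition braid_rel :: "'a set \<Rightarrow> ('a \<times> 'a \<Rightarrow> 'a \<times> 'a) \<Rightarrow> bool" where
  "braid_rel X r \<longleftrightarrow>
     (\<forall>x\<in>X. \<forall>y\<in>X. \<forall>z\<in>X.
        (let r12 = (\<lambda>(a,b,c). (let (p,q) = r (a,b) in (p,q,c)));
             r23 = (\<lambda>(a,b,c). (let (p,q) = r (b,c) in (a,p,q)))
         in r12 (r23 (r12 (x,y,z))) = r23 (r12 (r23 (x,y,z)))))"

definition is_solution :: "'a set \<Rightarrow> ('a \<times> 'a \<Rightarrow> 'a \<times> 'a) \<Rightarrow> bool" where
  "is_solution X r \<longleftrightarrow> X \<noteq> {} \<and> r ` (X \<times> X) \<subseteq> X \<times> X \<and> braid_rel X r"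

(* r(x,y) = (lambda_x(y), rho_y(x)) *)
definition lam :: "('a \<times> 'a \<Rightarrow> 'a \<times> 'a) \<Rightarrow> 'a \<Rightarrow> 'a \<Rightarrow> 'a" where
  "lam r x y = fst (r (x, y))"

definition rho :: "('a \<times> 'a \<Rightarrow> 'a \<times> 'a) \<Rightarrow> 'a \<Rightarrow> 'a \<Rightarrow> 'a" where
  "rho r y x = snd (r (x, y))"

definition non_degenerate :: "'a set \<Rightarrow> ('a \<times> 'a \<Rightarrow> 'a \<times> 'a) \<Rightarrow> bool" where
  "non_degenerate X r \<longleftrightarrow>
     bij_betw r (X \<times> X) (X \<times> X) \<and>
     (\<forall>x\<in>X. bij_betw (lam r x) X X) \<and>
     (\<forall>y\<in>X. bij_betw (rho r y) X X)"

definition decomposable :: "'a set \<Rightarrow> ('a \<times> 'a \<Rightarrow> 'a \<times> 'a) \<Rightarrow> bool" where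
  "decomposable X r \<longleftrightarrow>
     (\<exists>Y Z. X = Y \<union> Z \<and> Y \<inter> Z = {} \<and> Y \<noteq> {} \<and> Z \<noteq> {} \<and>
        r ` (Y \<times> Y) \<subseteq> Y \<times> Y \<and> r ` (Z \<times> Z) \<subseteq> Z \<times> Z \<and>
        is_solution Y r \<and> is_solution Z r)"

definition indecomposable :: "'a set \<Rightarrow> ('a \<times> 'a \<Rightarrow> 'a \<times> 'a) \<Rightarrow> bool" where
  "indecomposable X r \<longleftrightarrow> \<not> decomposable X r"

definition sol_morphism :: "'a set \<Rightarrow> ('a \<times> 'a \<Rightarrow> 'a \<times> 'a) \<Rightarrow> 'b set \<Rightarrow> ('b \<times> 'b \<Rightarrow> 'b \<times> 'b)
    \<Rightarrow> ('a \<Rightarrow> 'b) \<Rightarrow> bool" where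
  "sol_morphism X r Y s f \<longleftrightarrow>
     f ` X \<subseteq> Y \<and>
     (\<forall>x\<in>X. \<forall>y\<in>X. map_prod f f (r (x, y)) = s (f x, f y))"

(* simplicity, testing against all solutions (Y,s) whose elements have type 'b;
   the theorem quantifies over all types 'b. *)
definition simple_sol :: "'b itself \<Rightarrow> 'a set \<Rightarrow> ('a \<times> 'a \<Rightarrow> 'a \<times> 'a) \<Rightarrow> bool" where
  "simple_sol _ X r \<longleftrightarrow>
     card X > 1 \<and>
     (\<forall>(Y::'b set) s f. is_solution Y s \<longrightarrow> sol_morphism X r Y s f \<longrightarrow> f ` X = Y \<longrightarrow>
         bij_betw f X Y \<or> card Y = 1)"

end

theory Submission
  imports Defs
begin

definition stepR :: "'a set \<Rightarrow> ('a \<times> 'a \<Rightarrow> 'a \<times> 'a) \<Rightarrow> ('a \<times> 'a) set" where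
  "stepR X r = {(y, lam r x y) | x y. x \<in> X \<and> y \<in> X} \<union> {(y, rho r x y) | x y. x \<in> X \<and> y \<in> X}"

lemma r_in: "is_solution X r \<Longrightarrow> x \<in> X \<Longrightarrow> y \<in> X \<Longrightarrow> r (x, y) \<in> X \<times> X"
  unfolding is_solution_def image_subset_iff by simp

lemma lam_in: "is_solution X r \<Longrightarrow> x \<in> X \<Longrightarrow> y \<in> X \<Longrightarrow> lam r x y \<in> X"
  using r_in[of X r x y] unfolding lam_def by (simp add: mem_Times_iff)

lemma rho_in: "is_solution X r \<Longrightarrow> x \<in> X \<Longrightarrow> y \<in> X \<Longrightarrow> rho r x y \<in> X"
  using r_in[of X r y x] unfolding rho_def by (simp add: mem_Times_iff)

lemma r_eq: "r (x, y) = (lam r x y, rho r y x)"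
  unfolding lam_def rho_def by simp

lemma ball3_sub: "(\<forall>x\<in>X. \<forall>y\<in>X. \<forall>z\<in>X. P x y z) \<Longrightarrow> Y \<subseteq> X \<Longrightarrow> (\<forall>x\<in>Y. \<forall>y\<in>Y. \<forall>z\<in>Y. P x y z)"
  by blast

lemma braid_sub: "braid_rel X r \<Longrightarrow> Y \<subseteq> X \<Longrightarrow> braid_rel Y r"
  unfolding braid_rel_def by (rule ball3_sub)

lemma sub_solution:
  assumes "is_solution X r" "Y \<subseteq> X" "Y \<noteq> {}"
    "\<And>x y. x \<in> Y \<Longrightarrow> y \<in> Y \<Longrightarrow> lam r x y \<in> Y \<and> rho r y x \<in> Y"
  shows "is_solution Y r \<and> r ` (Y \<times> Y) \<subseteq> Y \<times> Y"
proof -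
  have "r ` (Y \<times> Y) \<subseteq> Y \<times> Y"
    using assms(4) by (auto simp: r_eq)
  moreover have "braid_rel Y r" using assms(1,2) braid_sub is_solution_def by blast
  ultimately show ?thesis using assms(3) by (simp add: is_solution_def)
qed

lemma compl_closed:
  assumes "finite X" "bij_betw h X X" "Ob \<subseteq> X" "h ` Ob \<subseteq> Ob" "z \<in> X - Ob"
  shows "h z \<in> X - Ob"
proof -
  have inj: "inj_on h X" using assms(2) by (simp add: bij_betw_def)
  have hz: "h z \<in> X" using assms(2,5) by (auto simp: bij_betw_def)
  have injO: "inj_on h Ob" using inj_on_subset[OF inj assms(3)] .
  have "card (h ` Ob) = card Ob" using card_image[OF injO] .
  moreover have "finite Ob" using finite_subset[OF assms(3,1)] .
  ultimately have hOb: "h ` Ob = Ob" using card_subset_eq[OF _ assms(4)] by simp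
  show ?thesis
  proof (rule ccontr)
    assume "h z \<notin> X - Ob"
    then have "h z \<in> h ` Ob" using hz hOb by simp
    then obtain o' where o': "o' \<in> Ob" "h z = h o'" by auto
    have "o' \<in> X" using o'(1) assms(3) by auto
    then have "z = o'" using inj o'(2) assms(5) by (simp add: inj_on_def)
    then show False using assms(5) o'(1) by simp
  qed
qed

lemma stepR_E:
  assumes "(b, c) \<in> stepR X r"
  obtains x where "x \<in> X" "b \<in> X" "c = lam r x b \<or> c = rho r x b"
  using assms unfolding stepR_def by auto

lemma stepR_I:
  assumes "x \<in> X" "b \<in> X"
  shows "(b, lam r x b) \<in> stepR X r" "(b, rho r x b) \<in> stepR X r"
  using assms unfolding stepR_def by auto

lemma step_closed:
  assumes "is_solution X r" "(a, b) \<in> (stepR X r)\<^sup>*" "a \<in> X"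
  shows "b \<in> X"
  using assms(2,3)
proof (induction rule: rtrancl_induct)
  case base then show ?case .
next
  case (step b c)
  then obtain x where "x \<in> X" "b \<in> X" "c = lam r x b \<or> c = rho r x b"
    by (auto elim: stepR_E)
  then show ?case using assms(1) lam_in rho_in by auto
qed

lemma transitive:
  assumes fin: "finite X" and sol: "is_solution X r" and nd: "non_degenerate X r"
    and ind: "indecomposable X r" and a: "a \<in> X" and b: "b \<in> X"
  shows "(a, b) \<in> (stepR X r)\<^sup>*"
proof -
  define Ob where "Ob = {c. (a, c) \<in> (stepR X r)\<^sup>*}"
  have ObX: "Ob \<subseteq> X" using step_closed[OF sol] a Ob_def by blast
  have aOb: "a \<in> Ob" using Ob_def by simp
  have lamOb: "lam r x y \<in> Ob" if "x \<in> X" "y \<in> Ob" for x y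
  proof -
    have "y \<in> X" using that(2) ObX by auto
    then have "(y, lam r x y) \<in> stepR X r" using stepR_I(1)[OF that(1)] by simp
    then show ?thesis using that Ob_def rtrancl_into_rtrancl by fastforce
  qed
  have rhoOb: "rho r x y \<in> Ob" if "x \<in> X" "y \<in> Ob" for x y
  proof -
    have "y \<in> X" using that(2) ObX by auto
    then have "(y, rho r x y) \<in> stepR X r" using stepR_I(2)[OF that(1)] by simp
    then show ?thesis using that Ob_def rtrancl_into_rtrancl by fastforce
  qed
  define Z where "Z = X - Ob"
  have lamZ: "lam r x y \<in> Z" if "x \<in> X" "y \<in> Z" for x y
    using compl_closed[OF fin _ ObX _ that(2)[unfolded Z_def], of "lam r x"] nd that(1) lamOb
    unfolding non_degenerate_def Z_def by blast
  have rhoZ: "rho r x y \<in> Z" if "x \<in> X" "y \<in> Z" for x y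
    using compl_closed[OF fin _ ObX _ that(2)[unfolded Z_def], of "rho r x"] nd that(1) rhoOb
    unfolding non_degenerate_def Z_def by blast
  have "Z = {}"
  proof (rule ccontr)
    assume Zne: "Z \<noteq> {}"
    have s1: "is_solution Ob r \<and> r ` (Ob \<times> Ob) \<subseteq> Ob \<times> Ob"
      using sub_solution[OF sol ObX] aOb lamOb rhoOb ObX by blast
    have ZX: "Z \<subseteq> X" using Z_def by blast
    have s2: "is_solution Z r \<and> r ` (Z \<times> Z) \<subseteq> Z \<times> Z"
      using sub_solution[OF sol ZX Zne] lamZ rhoZ ZX by blast
    have "decomposable X r" unfolding decomposable_def
      apply (rule exI[of _ Ob], rule exI[of _ Z])
      using s1 s2 ObX aOb Zne Z_def by blast
    then show False using ind indecomposable_def by blast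
  qed
  then show ?thesis using b Z_def Ob_def by blast
qed

lemma mor_lam:
  assumes "sol_morphism X r Y s f" "x \<in> X" "y \<in> X"
  shows "f (lam r x y) = fst (s (f x, f y))"
proof -
  have "map_prod f f (r (x, y)) = s (f x, f y)" using assms unfolding sol_morphism_def by blast
  from arg_cong[OF this, of fst] show ?thesis by (simp add: lam_def)
qed

lemma mor_rho:
  assumes "sol_morphism X r Y s f" "x \<in> X" "y \<in> X"
  shows "f (rho r y x) = snd (s (f x, f y))"
proof -
  have "map_prod f f (r (x, y)) = s (f x, f y)" using assms unfolding sol_morphism_def by blast
  from arg_cong[OF this, of snd] show ?thesis by (simp add: rho_def)
qed

lemma fiber_map:
  assumes sol: "is_solution X r" and nd: "non_degenerate X r"
    and mor: "sol_morphism X r Y s f"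
    and ab: "(a, b) \<in> (stepR X r)\<^sup>*" and a: "a \<in> X"
  shows "\<exists>g. g ` X \<subseteq> X \<and> inj_on g X \<and> g a = b \<and>
           (\<forall>y\<in>X. \<forall>y'\<in>X. f y = f y' \<longrightarrow> f (g y) = f (g y'))"
  using ab
proof (induction rule: rtrancl_induct)
  case base
  show ?case by (rule exI[of _ id]) auto
next
  case (step b c)
  obtain g where g: "g ` X \<subseteq> X" "inj_on g X" "g a = b"
    "\<forall>y\<in>X. \<forall>y'\<in>X. f y = f y' \<longrightarrow> f (g y) = f (g y')" using step.IH by blast
  from step.hyps(2) obtain x where x: "x \<in> X" "c = lam r x b \<or> c = rho r x b"
    by (auto elim: stepR_E)
  then obtain h where xh: "x \<in> X" "c = h b"
    and hc: "h = lam r x \<or> h = rho r x" by blast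
  have hX1: "h ` X \<subseteq> X"
    using hc lam_in[OF sol xh(1)] rho_in[OF sol xh(1)] by auto
  have hX2: "inj_on h X"
  proof -
    have "bij_betw (lam r x) X X" "bij_betw (rho r x) X X" using nd xh(1) unfolding non_degenerate_def by blast+
    then show ?thesis using hc unfolding bij_betw_def by blast
  qed
  note hX = hX1 hX2
  have hf: "f (h y) = f (h y')" if "y \<in> X" "y' \<in> X" "f y = f y'" for y y'
  proof (cases "h = lam r x")
    case True
    have "f (h y) = fst (s (f x, f y))" using True mor_lam[OF mor xh(1) that(1)] by (simp only:)
    also have "\<dots> = fst (s (f x, f y'))" by (simp only: that(3))
    also have "\<dots> = f (h y')" using True mor_lam[OF mor xh(1) that(2)] by (simp only:)
    finally show ?thesis .
  next
    case False
    then have H: "h = rho r x" using hc by blast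
    have "f (h y) = snd (s (f y, f x))" using H mor_rho[OF mor that(1) xh(1)] by (simp only:)
    also have "\<dots> = snd (s (f y', f x))" by (simp only: that(3))
    also have "\<dots> = f (h y')" using H mor_rho[OF mor that(2) xh(1)] by (simp only:)
    finally show ?thesis .
  qed
  show ?case
  proof (rule exI[of _ "h \<circ> g"], intro conjI)
    have "h ` (g ` X) \<subseteq> h ` X" using g(1) by (rule image_mono)
    then show "(h \<circ> g) ` X \<subseteq> X" using hX(1) by (simp only: image_comp[symmetric])
    show "inj_on (h \<circ> g) X" by (rule comp_inj_on[OF g(2) inj_on_subset[OF hX(2) g(1)]])
    show "(h \<circ> g) a = c" using g(3) xh(2) by simp
    show "\<forall>y\<in>X. \<forall>y'\<in>X. f y = f y' \<longrightarrow> f ((h \<circ> g) y) = f ((h \<circ> g) y')"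
    proof (intro ballI impI)
      fix y y' assume yy: "y \<in> X" "y' \<in> X" "f y = f y'"
      have "f (g y) = f (g y')" using g(4) yy by blast
      moreover have "g y \<in> X" "g y' \<in> X" using g(1) yy by auto
      ultimately show "f ((h \<circ> g) y) = f ((h \<circ> g) y')" using hf[of "g y" "g y'"] by simp
    qed
  qed
qed

theorem mainTheorem9:
  fixes X :: "'a set" and r :: "'a \<times> 'a \<Rightarrow> 'a \<times> 'a"
  assumes "finite X"
    and "is_solution X r"
    and "non_degenerate X r"
    and "indecomposable X r"
    and "prime (card X :: nat)"
  shows "simple_sol TYPE('b) X r"
  unfolding simple_sol_def
proof (intro conjI allI impI)
  show "card X > 1" using assms(5) prime_gt_1_nat by blast
  fix Y :: "'b set" and s f
  assume Ys: "is_solution Y s" and mor: "sol_morphism X r Y s f" and surj: "f ` X = Y"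
  define F where "F c = {y \<in> X. f y = c}" for c
  have finF: "finite (F c)" for c using assms(1) unfolding F_def by simp
  have le: "card (F (f a)) \<le> card (F (f b))" if ab: "a \<in> X" "b \<in> X" for a b
  proof -
    obtain g where g: "g ` X \<subseteq> X" "inj_on g X" "g a = b"
      "\<forall>y\<in>X. \<forall>y'\<in>X. f y = f y' \<longrightarrow> f (g y) = f (g y')"
      using fiber_map[OF assms(2,3) mor transitive[OF assms(1-4) ab] ab(1)] by blast
    have sub: "g ` F (f a) \<subseteq> F (f b)"
    proof
      fix z assume "z \<in> g ` F (f a)"
      then obtain y where y: "y \<in> X" "f y = f a" "z = g y" unfolding F_def by blast
      have "f (g y) = f (g a)" using g(4) y(1,2) ab(1) by blast
      then have "f z = f b" using y(3) g(3) by simp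
      moreover have "z \<in> X" using g(1) y(1,3) by blast
      ultimately show "z \<in> F (f b)" unfolding F_def by blast
    qed
    have "F (f a) \<subseteq> X" unfolding F_def by blast
    then have "inj_on g (F (f a))" using g(2) by (rule inj_on_subset[rotated])
    then show ?thesis using card_inj_on_le[OF _ sub finF] by blast
  qed
  obtain a0 where a0: "a0 \<in> X" using assms(2) unfolding is_solution_def by blast
  define k where "k = card (F (f a0))"
  have Fk: "card (F c) = k" if cY: "c \<in> Y" for c
  proof -
    obtain a where a: "a \<in> X" "c = f a" using cY surj by blast
    have "card (F (f a)) \<le> k" using le[OF a(1) a0] k_def by simp
    moreover have "k \<le> card (F (f a))" using le[OF a0 a(1)] k_def by simp
    ultimately show ?thesis using a(2) by simp
  qed
  have XU: "X = \<Union> (F ` Y)" using surj unfolding F_def by blast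
  have finY: "finite Y" using surj assms(1) by blast
  have disj: "\<forall>i\<in>Y. \<forall>j\<in>Y. i \<noteq> j \<longrightarrow> F i \<inter> F j = {}" unfolding F_def by blast
  have "card X = (\<Sum>c\<in>Y. card (F c))"
    using card_UN_disjoint[OF finY _ disj] finF XU by simp
  also have "\<dots> = (\<Sum>c\<in>Y. k)" using Fk by (rule sum.cong[OF refl])
  also have "\<dots> = card Y * k" by simp
  finally have cX: "card X = card Y * k" .
  then have "card Y dvd card X" by simp
  then have "card Y = 1 \<or> card Y = card X" using assms(5) prime_nat_iff by blast
  then show "bij_betw f X Y \<or> card Y = 1"
  proof
    assume "card Y = card X"
    then have "inj_on f X" using inj_on_iff_eq_card[OF assms(1), of f] surj by simp
    then show ?thesis using surj bij_betw_def by blast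
  qed simp
qed

end
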